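(* Let $f$ be a (partial) function $A^\omega\to A^\omega$ realizable by a $1$-deterministic $2$-automaton. Then for every infinite word $x$ in the domain of $f$, $\rho(f(x)/x)=0$.
   Context: A $k$-automaton $\langle Q,A,\delta,I\rangle$ has finite state set $Q$, transitions $\delta\subseteq Q\times(A\cup\{\varepsilon\})^k\times Q$, initial states $I$; an infinite run is accepting if it starts in $I$ and all components of its label (componentwise concatenation of transition labels) are infinite. It is $\ell$-deterministic if $I$ is a singleton and, for two transitions from the same state with labels $(\alpha_i),(\alpha'_i)$, $\alpha_j=\varepsilon$ for some $j\le\ell$ implies $\alpha'_j=\varepsilon$, and $\alpha_i=\alpha'_i$ for all $i\le\ell$ implies equality of the remaining components and target states; it realizes the partial function mapping the first $\ell$ tapes to the remaining ones. A compressor is a $2$-deterministic $3$-automaton $\mathcal C$ (first input tape: the word $z$ to compress; second input tape: oracle $y$; third: output) such that for each fixed $y$ the map $z\mapsto\mathcal C(z,y)$ is injective. For the accepting run $q_0\xrightarrow{\alpha_1,\beta_1|w_1}q_1\xrightarrow{\alpha_2,\beta_2|w_2}\cdots$ with $z=\alpha_1\alpha_2\cdots$, $y=\beta_1\beta_2\cdots$, $\rho_{\mathcal C}(z/y)=\liminf_n|w_1\cdots w_n|/|\alpha_1\cdots\alpha_n|$, and $\rho(z/y)$ is the infimum of $\rho_{\mathcal C}(z/y)$ over all compressors. *)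

theory Defs
  imports Complex_Main "HOL-Library.Infinite_Set" "HOL-Library.Extended_Real"
          "HOL-Library.Liminf_Limsup"
begin

text \<open>A transition label in (A \<union> {\<epsilon>})^k is a list of length k of 'a option
  (None = \<epsilon>). Tapes are indexed 0..k-1 (paper: 1..k).\<close>

record ('q, 'a) kaut =
  states :: "'q set"
  trans  :: "('q \<times> 'a option list \<times> 'q) set"
  init   :: "'q set"

definition is_kaut :: "nat \<Rightarrow> ('q, 'a) kaut \<Rightarrow> bool" where
  "is_kaut k A \<longleftrightarrow> finite (states A) \<and> init A \<subseteq> states A \<and>
     (\<forall>(p, \<alpha>, q) \<in> trans A. p \<in> states A \<and> q \<in> states A \<and> length \<alpha> = k)"

definition is_run :: "('q, 'a) kaut \<Rightarrow> (nat \<Rightarrow> 'q) \<Rightarrow> (nat \<Rightarrow> 'a option list) \<Rightarrow> bool" where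
  "is_run A r l \<longleftrightarrow> r 0 \<in> init A \<and> (\<forall>n. (r n, l n, r (Suc n)) \<in> trans A)"

definition accepting_run :: "nat \<Rightarrow> ('q, 'a) kaut \<Rightarrow> (nat \<Rightarrow> 'q) \<Rightarrow> (nat \<Rightarrow> 'a option list) \<Rightarrow> bool" where
  "accepting_run k A r l \<longleftrightarrow> is_run A r l \<and> (\<forall>i<k. infinite {n. l n ! i \<noteq> None})"

text \<open>The i-th component of the label (concatenation of the i-th components),
  meaningful when it is infinite.\<close>
definition component :: "(nat \<Rightarrow> 'a option list) \<Rightarrow> nat \<Rightarrow> (nat \<Rightarrow> 'a)" where
  "component l i = (\<lambda>m. the (l (enumerate {n. l n ! i \<noteq> None} m) ! i))"

definition run_label :: "nat \<Rightarrow> (nat \<Rightarrow> 'a option list) \<Rightarrow> (nat \<Rightarrow> 'a) list" where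
  "run_label k l = map (component l) [0..<k]"

definition accepted :: "nat \<Rightarrow> ('q, 'a) kaut \<Rightarrow> (nat \<Rightarrow> 'a) list set" where
  "accepted k A = {ws. \<exists>r l. accepting_run k A r l \<and> ws = run_label k l}"

definition deterministic :: "nat \<Rightarrow> ('q, 'a) kaut \<Rightarrow> bool" where
  "deterministic m A \<longleftrightarrow> (\<exists>q0. init A = {q0}) \<and>
     (\<forall>p \<alpha> q \<alpha>' q'. (p, \<alpha>, q) \<in> trans A \<longrightarrow> (p, \<alpha>', q') \<in> trans A \<longrightarrow>
        (\<forall>j<m. \<alpha> ! j = None \<longrightarrow> \<alpha>' ! j = None) \<and>
        ((\<forall>i<m. \<alpha> ! i = \<alpha>' ! i) \<longrightarrow> drop m \<alpha> = drop m \<alpha>' \<and> q = q'))"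

definition realizes_1_2 :: "('q, 'a) kaut \<Rightarrow> ((nat \<Rightarrow> 'a) \<Rightarrow> (nat \<Rightarrow> 'a) option) \<Rightarrow> bool" where
  "realizes_1_2 A f \<longleftrightarrow> (\<forall>x y. f x = Some y \<longleftrightarrow> [x, y] \<in> accepted 2 A)"

text \<open>Compressors; state sets are taken inside nat (no loss of generality, finite).\<close>
definition compressor :: "(nat, 'a) kaut \<Rightarrow> bool" where
  "compressor C \<longleftrightarrow> is_kaut 3 C \<and> deterministic 2 C \<and>
     (\<forall>y z z' w. [z, y, w] \<in> accepted 3 C \<longrightarrow> [z', y, w] \<in> accepted 3 C \<longrightarrow> z = z')"

definition rho_run :: "(nat \<Rightarrow> 'a option list) \<Rightarrow> ereal" where
  "rho_run l = liminf (\<lambda>n. ereal (real (card {i. i < n \<and> l i ! 2 \<noteq> None})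
                                   / real (card {i. i < n \<and> l i ! 0 \<noteq> None})))"

text \<open>rho z y = \<rho>(z/y): infimum over compressors C (with their accepting run on (z,y)).\<close>
definition rho :: "(nat \<Rightarrow> 'a) \<Rightarrow> (nat \<Rightarrow> 'a) \<Rightarrow> ereal" where
  "rho z y = (INF (C, r, l) \<in> {(C :: (nat, 'a) kaut, r, l). compressor C \<and> accepting_run 3 C r l
                 \<and> component l 0 = z \<and> component l 1 = y}. rho_run l)"

end

theory Submission
  imports Defs
begin

lemma enum_unique:
  fixes g :: "nat \<Rightarrow> nat"
  assumes sm: "strict_mono g" and T: "T = range g"
  shows "enumerate T n = g n"
proof -
  have inf: "infinite T" unfolding T
    by (rule range_inj_infinite) (rule strict_mono_imp_inj_on[OF sm])
  show ?thesis
  proof (induction n)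
    case 0
    show ?case unfolding enumerate_0
    proof (rule Least_equality)
      show "g 0 \<in> T" using T by auto
      fix y assume "y \<in> T" then obtain m where "y = g m" using T by auto
      then show "g 0 \<le> y" using sm by (simp add: strict_mono_less_eq)
    qed
  next
    case (Suc n)
    show ?case unfolding enumerate_Suc''[OF inf] Suc
    proof (rule Least_equality)
      show "g (Suc n) \<in> T \<and> g n < g (Suc n)" using T sm by (auto simp: strict_mono_def)
      fix y assume "y \<in> T \<and> g n < y"
      then obtain m where "y = g m" "g n < g m" using T by auto
      then have "n < m" using sm by (simp add: strict_mono_less)
      then show "g (Suc n) \<le> y" using sm \<open>y = g m\<close> by (simp add: strict_mono_less_eq)
    qed
  qed
qed

lemma enum_image:
  fixes h :: "nat \<Rightarrow> nat"
  assumes "strict_mono h" "infinite S"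
  shows "enumerate (h ` S) n = h (enumerate S n)"
proof -
  have "strict_mono (h \<circ> enumerate S)"
    using assms strict_mono_enumerate by (metis strict_mono_o)
  moreover have "h ` S = range (h \<circ> enumerate S)"
    using range_enumerate[OF assms(2)] by (metis image_comp)
  ultimately show ?thesis using enum_unique by fastforce
qed

lemma stretch_set:
  fixes h :: "nat \<Rightarrow> nat"
  assumes sm: "strict_mono h" and eq: "\<And>m. L' (h m) ! i = L m ! j"
    and none: "\<And>n. n \<notin> range h \<Longrightarrow> L' n ! i = None"
  shows "{n. L' n ! i \<noteq> None} = h ` {m. L m ! j \<noteq> None}"
proof (intro set_eqI iffI)
  fix n assume "n \<in> {n. L' n ! i \<noteq> None}"
  then have "n \<in> range h"
  proof (rule contrapos_pp)
    assume "n \<notin> range h" then have "L' n ! i = None" by (rule none)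
    then show "n \<notin> {n. L' n ! i \<noteq> None}" by simp
  qed
  then obtain m where "n = h m" by auto
  moreover have "L' n ! i \<noteq> None" using \<open>n \<in> {n. L' n ! i \<noteq> None}\<close> by simp
  ultimately show "n \<in> h ` {m. L m ! j \<noteq> None}" using eq[of m] by auto
next
  fix n assume "n \<in> h ` {m. L m ! j \<noteq> None}"
  then obtain m where "n = h m" "L m ! j \<noteq> None" by auto
  then show "n \<in> {n. L' n ! i \<noteq> None}" using eq by simp
qed

lemma stretch_inf:
  fixes h :: "nat \<Rightarrow> nat"
  assumes sm: "strict_mono h" and eq: "\<And>m. L' (h m) ! i = L m ! j"
    and none: "\<And>n. n \<notin> range h \<Longrightarrow> L' n ! i = None"
  shows "infinite {n. L' n ! i \<noteq> None} \<longleftrightarrow> infinite {m. L m ! j \<noteq> None}"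
proof -
  have S: "{n. L' n ! i \<noteq> None} = h ` {m. L m ! j \<noteq> None}"
    by (rule stretch_set) (use sm eq none in auto)
  show ?thesis unfolding S
  using sm by (simp add: finite_image_iff strict_mono_imp_inj_on)
qed

lemma stretch_comp:
  fixes h :: "nat \<Rightarrow> nat"
  assumes sm: "strict_mono h" and eq: "\<And>m. L' (h m) ! i = L m ! j"
    and none: "\<And>n. n \<notin> range h \<Longrightarrow> L' n ! i = None"
    and inf: "infinite {m. L m ! j \<noteq> None}"
  shows "component L' i = component L j"
proof -
  have S: "{n. L' n ! i \<noteq> None} = h ` {m. L m ! j \<noteq> None}"
    by (rule stretch_set) (use sm eq none in auto)
  have "component L' i m = component L j m" for m
  proof -
    have "component L' i m = the (L' (enumerate (h ` {m. L m ! j \<noteq> None}) m) ! i)"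
      unfolding component_def S by (rule refl)
    also have "\<dots> = the (L (enumerate {m. L m ! j \<noteq> None} m) ! j)"
      unfolding enum_image[OF sm inf] eq by simp
    finally show ?thesis unfolding component_def by simp
  qed
  then show ?thesis by auto
qed

lemma card_Suc_split:
  "card {i. i < Suc n \<and> P i} = card {i. i < n \<and> P i} + (if P n then 1 else 0)"
proof -
  have "{i. i < Suc n \<and> P i} = {i. i < n \<and> P i} \<union> (if P n then {n} else {})"
    by (auto simp: less_Suc_eq)
  then show ?thesis by auto
qed

lemma card_unbounded:
  fixes S :: "nat set"
  assumes "infinite S"
  shows "\<exists>n. N \<le> card {i. i < n \<and> i \<in> S}"
proof -
  have "enumerate S ` {..<N} \<subseteq> {i. i < enumerate S N \<and> i \<in> S}"
    using assms by (auto intro: enumerate_in_set)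
  moreover have "card (enumerate S ` {..<N}) = N"
    using inj_enumerate[OF assms] by (simp add: card_image inj_on_subset)
  ultimately show ?thesis by (metis card_mono finite_Collect_conjI finite_Collect_less_nat)
qed

definition ren :: "('s \<Rightarrow> nat) \<Rightarrow> ('s, 'a) kaut \<Rightarrow> (nat, 'a) kaut" where
  "ren h C = \<lparr>states = h ` states C, trans = (\<lambda>(p, a, q). (h p, a, h q)) ` trans C,
     init = h ` init C\<rparr>"

lemma ren_kaut: "is_kaut k C \<Longrightarrow> is_kaut k (ren h C)"
  unfolding is_kaut_def ren_def by auto

lemma ren_det:
  assumes "is_kaut k C" "inj_on h (states C)" "deterministic m C"
  shows "deterministic m (ren h C)"
proof -
  have tr: "(p, a, q) \<in> trans C \<Longrightarrow> p \<in> states C \<and> q \<in> states C" for p a q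
    using assms(1) unfolding is_kaut_def by auto
  have tr': "(p, a, q) \<in> trans (ren h C) \<Longrightarrow> \<exists>p0 q0. (p0, a, q0) \<in> trans C \<and> p = h p0 \<and> q = h q0" for p a q
    unfolding ren_def by auto
  have d: "\<And>p \<alpha> q \<alpha>' q'. (p, \<alpha>, q) \<in> trans C \<Longrightarrow> (p, \<alpha>', q') \<in> trans C \<Longrightarrow>
        (\<forall>j<m. \<alpha> ! j = None \<longrightarrow> \<alpha>' ! j = None) \<and>
        ((\<forall>i<m. \<alpha> ! i = \<alpha>' ! i) \<longrightarrow> drop m \<alpha> = drop m \<alpha>' \<and> q = q')"
    using assms(3) unfolding deterministic_def by blast
  have i0: "\<exists>q0. init (ren h C) = {q0}" using assms(3) unfolding deterministic_def ren_def by auto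
  have main: "(\<forall>j<m. \<alpha> ! j = None \<longrightarrow> \<alpha>' ! j = None) \<and>
        ((\<forall>i<m. \<alpha> ! i = \<alpha>' ! i) \<longrightarrow> drop m \<alpha> = drop m \<alpha>' \<and> q = q')"
    if t1: "(p, \<alpha>, q) \<in> trans (ren h C)" and t2: "(p, \<alpha>', q') \<in> trans (ren h C)" for p \<alpha> q \<alpha>' q'
  proof -
    obtain p1 q1 where a1: "(p1, \<alpha>, q1) \<in> trans C" "p = h p1" "q = h q1" using tr'[OF t1] by blast
    obtain p2 q2 where a2: "(p2, \<alpha>', q2) \<in> trans C" "p = h p2" "q' = h q2" using tr'[OF t2] by blast
    have "p1 = p2" using a1 a2 tr assms(2) by (metis inj_onD)
    then have D: "(\<forall>j<m. \<alpha> ! j = None \<longrightarrow> \<alpha>' ! j = None) \<and>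
        ((\<forall>i<m. \<alpha> ! i = \<alpha>' ! i) \<longrightarrow> drop m \<alpha> = drop m \<alpha>' \<and> q1 = q2)"
      using d[OF a1(1)] a2(1) by simp
    then show ?thesis using a1 a2 by auto
  qed
  show ?thesis unfolding deterministic_def using i0 main by blast
qed

lemma ren_run: "is_run C r l \<Longrightarrow> is_run (ren h C) (h \<circ> r) l"
  unfolding is_run_def ren_def by (auto simp: image_iff) (metis case_prod_conv)

lemma ren_run_back:
  assumes "is_kaut k C" "inj_on h (states C)" "is_run (ren h C) r l"
  shows "is_run C (inv_into (states C) h \<circ> r) l"
proof -
  have tr: "(p, a, q) \<in> trans C \<Longrightarrow> p \<in> states C \<and> q \<in> states C" for p a q
    using assms(1) unfolding is_kaut_def by auto
  have ini: "init C \<subseteq> states C" using assms(1) unfolding is_kaut_def by auto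
  have "\<forall>n. \<exists>p a q. (p, a, q) \<in> trans C \<and> r n = h p \<and> l n = a \<and> r (Suc n) = h q"
  proof
    fix n
    have "(r n, l n, r (Suc n)) \<in> (\<lambda>(p, a, q). (h p, a, h q)) ` trans C"
      using assms(3) unfolding is_run_def ren_def by auto
    then show "\<exists>p a q. (p, a, q) \<in> trans C \<and> r n = h p \<and> l n = a \<and> r (Suc n) = h q"
      by force
  qed
  then have "\<forall>n. (inv_into (states C) h (r n), l n, inv_into (states C) h (r (Suc n))) \<in> trans C"
    by (metis tr assms(2) inv_into_f_f)
  moreover have "inv_into (states C) h (r 0) \<in> init C"
    using assms(3) ini unfolding is_run_def ren_def by (auto simp: assms(2) inv_into_f_f subsetD)
  ultimately show ?thesis unfolding is_run_def by simp
qed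




definition C0 :: "('q, 'a) kaut \<Rightarrow> nat \<Rightarrow> (('q \<times> nat) + ('q \<times> 'a option \<times> nat), 'a) kaut" where
  "C0 A k = \<lparr>states = Inl ` (states A \<times> {..<k}) \<union> Inr ` (states A \<times> UNIV \<times> {..<k}),
     trans = {(Inl (p, c), [None, \<alpha> ! 0, None], Inr (q, \<alpha> ! 1, c)) | p \<alpha> q c. (p, \<alpha>, q) \<in> trans A \<and> c < k}
       \<union> {(Inr (q, b, c), [b, None, if c = 0 then b else None], Inl (q, if b = None then c else Suc c mod k))
            | q b c. q \<in> states A \<and> c < k},
     init = Inl ` (init A \<times> {0})\<rparr>"

lemma C0_trans_Inl: "(Inl (p, c), a, s) \<in> trans (C0 A k) \<longleftrightarrow>
  (\<exists>\<alpha> q. (p, \<alpha>, q) \<in> trans A \<and> c < k \<and> a = [None, \<alpha> ! 0, None] \<and> s = Inr (q, \<alpha> ! 1, c))"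
  unfolding C0_def by auto

lemma C0_trans_Inr: "(Inr (q, b, c), a, s) \<in> trans (C0 A k) \<longleftrightarrow>
  q \<in> states A \<and> c < k \<and> a = [b, None, if c = 0 then b else None] \<and>
  s = Inl (q, if b = None then c else Suc c mod k)"
  unfolding C0_def by auto

lemma len2: "length xs = 2 \<Longrightarrow> xs = [xs ! 0, xs ! 1]"
  by (auto simp: numeral_2_eq_2 length_Suc_conv)

lemma C0_kaut:
  assumes "is_kaut 2 A" "0 < k" "finite (UNIV :: 'a set)"
  shows "is_kaut 3 (C0 A k :: (_, 'a) kaut)"
proof -
  have f1: "finite (states A \<times> (UNIV :: 'a option set) \<times> {..<k})"
    using assms(1,3) unfolding is_kaut_def by simp
  have f2: "finite (states A \<times> {..<k})" using assms(1) unfolding is_kaut_def by simp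
  show ?thesis
    using assms(1,2) f1 f2 unfolding is_kaut_def C0_def by auto
qed

lemma C0_det:
  assumes "is_kaut 2 A" "deterministic 1 A"
  shows "deterministic 2 (C0 A k)"
proof -
  obtain q0 where q0: "init A = {q0}" using assms(2) unfolding deterministic_def by auto
  have len: "(p, \<alpha>, q) \<in> trans A \<Longrightarrow> length \<alpha> = 2" for p \<alpha> q
    using assms(1) unfolding is_kaut_def by auto
  have dA: "(p, \<alpha>, q) \<in> trans A \<Longrightarrow> (p, \<alpha>', q') \<in> trans A \<Longrightarrow>
     (\<alpha> ! 0 = None \<longrightarrow> \<alpha>' ! 0 = None) \<and> (\<alpha> ! 0 = \<alpha>' ! 0 \<longrightarrow> \<alpha> ! 1 = \<alpha>' ! 1 \<and> q = q')"
    for p \<alpha> q \<alpha>' q'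
  proof -
    assume a: "(p, \<alpha>, q) \<in> trans A" "(p, \<alpha>', q') \<in> trans A"
    have "length \<alpha> = 2" "length \<alpha>' = 2" using len a by auto
    then have "drop 1 \<alpha> = [\<alpha> ! 1]" "drop 1 \<alpha>' = [\<alpha>' ! 1]"
      by (metis len2 drop0 drop_Suc_Cons One_nat_def)+
    then show ?thesis using assms(2) a unfolding deterministic_def
      by (metis less_one list.inject)
  qed
  show ?thesis
    unfolding deterministic_def
  proof -
    have i0: "\<exists>q0. init (C0 A k) = {q0}" using q0 unfolding C0_def by auto
    have m1: "\<forall>j<2. \<alpha> ! j = None \<longrightarrow> \<alpha>' ! j = None" if
      t1: "(p, \<alpha>, q) \<in> trans (C0 A k)" and t2: "(p, \<alpha>', q') \<in> trans (C0 A k)" for p \<alpha> q \<alpha>' q'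
    proof (cases p)
      case (Inl a)
      then obtain p0 c where "p = Inl (p0, c)" by (cases a) auto
      then obtain \<beta> q1 \<beta>' q2 where b: "(p0, \<beta>, q1) \<in> trans A" "\<alpha> = [None, \<beta> ! 0, None]"
          "(p0, \<beta>', q2) \<in> trans A" "\<alpha>' = [None, \<beta>' ! 0, None]"
        using t1 t2 by (auto simp: C0_trans_Inl)
      have "\<beta> ! 0 = None \<longrightarrow> \<beta>' ! 0 = None" using dA[OF b(1) b(3)] by blast
      then show ?thesis using b by (auto simp: less_2_cases_iff)
    next
      case (Inr a)
      then obtain p0 b c where "p = Inr (p0, b, c)" by (cases a) auto
      then show ?thesis using t1 t2 by (auto simp: C0_trans_Inr less_2_cases_iff)
    qed
    have m2: "drop 2 \<alpha> = drop 2 \<alpha>' \<and> q = q'" if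
      t1: "(p, \<alpha>, q) \<in> trans (C0 A k)" and t2: "(p, \<alpha>', q') \<in> trans (C0 A k)"
      and eq: "\<forall>i<2. \<alpha> ! i = \<alpha>' ! i" for p \<alpha> q \<alpha>' q'
    proof (cases p)
      case (Inl a)
      then obtain p0 c where "p = Inl (p0, c)" by (cases a) auto
      then obtain \<beta> q1 \<beta>' q2 where b: "(p0, \<beta>, q1) \<in> trans A" "\<alpha> = [None, \<beta> ! 0, None]"
          "q = Inr (q1, \<beta> ! 1, c)"
          "(p0, \<beta>', q2) \<in> trans A" "\<alpha>' = [None, \<beta>' ! 0, None]" "q' = Inr (q2, \<beta>' ! 1, c)"
        using t1 t2 by (auto simp: C0_trans_Inl)
      have "\<alpha> ! 1 = \<alpha>' ! 1" using eq by auto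
      then have "\<beta> ! 0 = \<beta>' ! 0" using b by simp
      then have "\<beta> ! 1 = \<beta>' ! 1 \<and> q1 = q2" using dA[OF b(1) b(4)] by simp
      then show ?thesis using b by simp
    next
      case (Inr a)
      then obtain p0 b c where "p = Inr (p0, b, c)" by (cases a) auto
      then show ?thesis using t1 t2 by (auto simp: C0_trans_Inr less_2_cases_iff)
    qed
    show "(\<exists>q0. init (C0 A k) = {q0}) \<and>
     (\<forall>p \<alpha> q \<alpha>' q'. (p, \<alpha>, q) \<in> trans (C0 A k) \<longrightarrow> (p, \<alpha>', q') \<in> trans (C0 A k) \<longrightarrow>
        (\<forall>j<2. \<alpha> ! j = None \<longrightarrow> \<alpha>' ! j = None) \<and>
        ((\<forall>i<2. \<alpha> ! i = \<alpha>' ! i) \<longrightarrow> drop 2 \<alpha> = drop 2 \<alpha>' \<and> q = q'))"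
      using i0 m1 m2 by blast
  qed
qed

definition cnt :: "('q \<times> nat) + ('q \<times> 'a option \<times> nat) \<Rightarrow> nat" where
  "cnt s = (case s of Inl (p, c) \<Rightarrow> c | Inr (q, b, c) \<Rightarrow> c)"

definition RCn :: "(nat \<Rightarrow> 'a option list) \<Rightarrow> nat \<Rightarrow> nat" where
  "RCn l n = card {i. i < n \<and> l i ! 0 \<noteq> None}"
definition OCn :: "(nat \<Rightarrow> 'a option list) \<Rightarrow> nat \<Rightarrow> nat" where
  "OCn l n = card {i. i < n \<and> l i ! 2 \<noteq> None}"

lemma C0_inv:
  assumes "is_run (C0 A k) r l" "0 < k"
  shows "cnt (r n) < k \<and> k * OCn l n = RCn l n + (if cnt (r n) = 0 then 0 else k - cnt (r n))"
proof (induction n)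
  case 0
  then show ?case using assms unfolding is_run_def C0_def RCn_def OCn_def cnt_def by auto
next
  case (Suc n)
  have t: "(r n, l n, r (Suc n)) \<in> trans (C0 A k)" using assms(1) unfolding is_run_def by auto
  have R: "RCn l (Suc n) = RCn l n + (if l n ! 0 \<noteq> None then 1 else 0)"
    unfolding RCn_def by (rule card_Suc_split)
  have O: "OCn l (Suc n) = OCn l n + (if l n ! 2 \<noteq> None then 1 else 0)"
    unfolding OCn_def by (rule card_Suc_split)
  show ?case
  proof (cases "r n")
    case (Inl a)
    then show ?thesis using t Suc R O unfolding C0_def cnt_def by auto
  next
    case (Inr a)
    then obtain q b c where rn: "r n = Inr (q, b, c)" by (cases a) auto
    then have ln: "l n = [b, None, if c = 0 then b else None]"
      and rs: "r (Suc n) = Inl (q, if b = None then c else Suc c mod k)" and ck: "c < k"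
      using t unfolding C0_def by auto
    have IH: "k * OCn l n = RCn l n + (if c = 0 then 0 else k - c)" using Suc rn by (simp add: cnt_def)
    show ?thesis
    proof (cases b)
      case None
      then show ?thesis using IH R O ln rs ck by (simp add: cnt_def)
    next
      case (Some s)
      then have R1: "RCn l (Suc n) = RCn l n + 1" and O1: "OCn l (Suc n) = OCn l n + (if c = 0 then 1 else 0)"
        using R O ln by auto
      have rs': "cnt (r (Suc n)) = Suc c mod k" using rs Some by (simp add: cnt_def)
      show ?thesis
      proof (cases "Suc c < k")
        case True
        then show ?thesis using IH R1 O1 rs' ck by (auto simp: algebra_simps)
      next
        case False
        then have "Suc c = k" using ck by auto
        then show ?thesis using IH R1 O1 rs' ck by (auto simp: algebra_simps)
      qed
    qed
  qed
qed

lemma C0_bounds: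
  assumes "is_run (C0 A k) r l" "0 < k"
  shows "k * OCn l n \<le> RCn l n + k" "RCn l n \<le> k * OCn l n"
  using C0_inv[OF assms, of n] by auto



lemma rho_bound:
  assumes run: "is_run (C0 A k) r l" and k: "0 < k" and inf: "infinite {n. l n ! 0 \<noteq> None}"
  shows "rho_run l \<le> ereal (2 / real k)"
proof -
  obtain n0 where n0: "k \<le> RCn l n0"
    using card_unbounded[OF inf, of k] unfolding RCn_def by auto
  have ev: "\<forall>\<^sub>F n in sequentially. ereal (real (OCn l n) / real (RCn l n)) \<le> ereal (2 / real k)"
    unfolding eventually_sequentially
  proof (intro exI allI impI)
    fix n assume "n0 \<le> n"
    then have "RCn l n0 \<le> RCn l n" unfolding RCn_def by (intro card_mono) auto
    then have R: "k \<le> RCn l n" using n0 by simp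
    have "k * OCn l n \<le> RCn l n + k" using C0_bounds[OF run k] by blast
    then have "k * OCn l n \<le> 2 * RCn l n" using R by simp
    then have "real k * real (OCn l n) \<le> 2 * real (RCn l n)" by (metis of_nat_le_iff of_nat_mult of_nat_numeral)
    moreover have "0 < real (RCn l n)" using R k by simp
    ultimately show "ereal (real (OCn l n) / real (RCn l n)) \<le> ereal (2 / real k)"
      using k by (simp add: divide_simps mult.commute)
  qed
  show ?thesis unfolding rho_run_def OCn_def[symmetric] RCn_def[symmetric]
    by (rule Liminf_le[OF _ ev]) simp
qed

lemma out_inf:
  assumes run: "is_run (C0 A k) r l" and k: "0 < k" and inf: "infinite {n. l n ! 0 \<noteq> None}"
  shows "infinite {n. l n ! 2 \<noteq> None}"
proof
  assume F: "finite {n. l n ! 2 \<noteq> None}"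
  obtain n where n: "k * card {n. l n ! 2 \<noteq> None} + 1 \<le> RCn l n"
    using card_unbounded[OF inf] unfolding RCn_def by auto
  have "OCn l n \<le> card {n. l n ! 2 \<noteq> None}" unfolding OCn_def using F by (intro card_mono) auto
  then have "k * OCn l n \<le> k * card {n. l n ! 2 \<noteq> None}" by (rule mult_le_mono2)
  moreover have "RCn l n \<le> k * OCn l n" using C0_bounds[OF run k] by blast
  ultimately show False using n by linarith
qed

primrec ctr :: "nat \<Rightarrow> (nat \<Rightarrow> 'a option list) \<Rightarrow> nat \<Rightarrow> nat" where
  "ctr k l 0 = 0"
| "ctr k l (Suc m) = (if l m ! 1 = None then ctr k l m else Suc (ctr k l m) mod k)"

lemma ctr_less: "0 < k \<Longrightarrow> ctr k l m < k"
  by (induction m) auto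

definition rCd :: "nat \<Rightarrow> (nat \<Rightarrow> 'q) \<Rightarrow> (nat \<Rightarrow> 'a option list) \<Rightarrow> nat \<Rightarrow> ('q \<times> nat) + ('q \<times> 'a option \<times> nat)" where
  "rCd k rA lA n = (if even n then Inl (rA (n div 2), ctr k lA (n div 2))
     else Inr (rA (Suc (n div 2)), lA (n div 2) ! 1, ctr k lA (n div 2)))"

definition lCd :: "nat \<Rightarrow> (nat \<Rightarrow> 'a option list) \<Rightarrow> nat \<Rightarrow> 'a option list" where
  "lCd k lA n = (if even n then [None, lA (n div 2) ! 0, None]
     else [lA (n div 2) ! 1, None, if ctr k lA (n div 2) = 0 then lA (n div 2) ! 1 else None])"

lemma even_odd_split: "n = 2 * (n div 2) \<or> n = Suc (2 * (n div 2))" for n :: nat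
  by presburger

lemma A_to_C0:
  assumes kA: "is_kaut 2 A" and run: "is_run A rA lA" and k: "0 < k"
  shows "is_run (C0 A k) (rCd k rA lA) (lCd k lA)"
  unfolding is_run_def
proof (intro conjI allI)
  show "rCd k rA lA 0 \<in> init (C0 A k)"
    using run unfolding rCd_def C0_def is_run_def by auto
next
  fix n
  obtain m where m: "n = 2 * m \<or> n = Suc (2 * m)" using even_odd_split by blast
  have tA: "(rA m, lA m, rA (Suc m)) \<in> trans A" using run unfolding is_run_def by auto
  then have st: "rA (Suc m) \<in> states A" using kA unfolding is_kaut_def by auto
  have cl: "ctr k lA m < k" by (rule ctr_less[OF k])
  show "(rCd k rA lA n, lCd k lA n, rCd k rA lA (Suc n)) \<in> trans (C0 A k)"
  proof (cases "n = 2 * m")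
    case True
    then show ?thesis using tA cl unfolding rCd_def lCd_def
      by (auto simp: C0_trans_Inl)
  next
    case False
    then have n: "n = Suc (2 * m)" using m by auto
    have "Suc n = 2 * Suc m" using n by simp
    then show ?thesis using n st cl unfolding rCd_def lCd_def
      by (auto simp: C0_trans_Inr)
  qed
qed

lemma sm2: "strict_mono (\<lambda>m::nat. 2 * m)" by (simp add: strict_mono_def)
lemma sm2s: "strict_mono (\<lambda>m::nat. Suc (2 * m))" by (simp add: strict_mono_def)

lemma notr2: "n \<notin> range (\<lambda>m::nat. 2 * m) \<Longrightarrow> n = Suc (2 * (n div 2))"
  using even_odd_split[of n] by auto
lemma notr2s: "n \<notin> range (\<lambda>m::nat. Suc (2 * m)) \<Longrightarrow> n = 2 * (n div 2)"
  using even_odd_split[of n] by auto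

lemma lCd_props:
  "lCd k lA (2 * m) ! 1 = lA m ! 0" "lCd k lA (Suc (2 * m)) ! 0 = lA m ! 1"
  "lCd k lA (2 * m) ! 0 = None" "lCd k lA (Suc (2 * m)) ! 1 = None"
  unfolding lCd_def by auto

lemma C0_step:
  assumes run: "is_run (C0 A k) r l" and r: "r (2 * m) = Inl (p, c)"
  shows "\<exists>\<alpha> q c'. (p, \<alpha>, q) \<in> trans A \<and> l (2 * m) = [None, \<alpha> ! 0, None] \<and>
     l (Suc (2 * m)) ! 0 = \<alpha> ! 1 \<and> l (Suc (2 * m)) ! 1 = None \<and> r (2 * Suc m) = Inl (q, c')"
proof -
  have t1: "(r (2 * m), l (2 * m), r (Suc (2 * m))) \<in> trans (C0 A k)" using run unfolding is_run_def by blast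
  obtain \<alpha> q where a: "(p, \<alpha>, q) \<in> trans A" "l (2 * m) = [None, \<alpha> ! 0, None]"
    "r (Suc (2 * m)) = Inr (q, \<alpha> ! 1, c)" using t1 r by (auto simp: C0_trans_Inl)
  have t2: "(r (Suc (2 * m)), l (Suc (2 * m)), r (Suc (Suc (2 * m)))) \<in> trans (C0 A k)"
    using run unfolding is_run_def by blast
  then have "l (Suc (2 * m)) = [\<alpha> ! 1, None, if c = 0 then \<alpha> ! 1 else None]"
    "r (Suc (Suc (2 * m))) = Inl (q, if \<alpha> ! 1 = None then c else Suc c mod k)"
    using a(3) by (auto simp: C0_trans_Inr)
  then show ?thesis using a by auto
qed

lemma C0_phase:
  assumes run: "is_run (C0 A k) r l"
  shows "\<exists>p c. r (2 * m) = Inl (p, c)"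
proof (induction m)
  case 0
  then show ?case using run unfolding is_run_def C0_def by auto
next
  case (Suc m)
  then obtain p c where "r (2 * m) = Inl (p, c)" by blast
  then show ?case using C0_step[OF run] by blast
qed

definition proj :: "('q \<times> nat) + ('q \<times> 'a option \<times> nat) \<Rightarrow> 'q" where
  "proj s = (case s of Inl (p, c) \<Rightarrow> p | Inr (q, b, c) \<Rightarrow> q)"

lemma C0_to_A:
  assumes kA: "is_kaut 2 A" and run: "is_run (C0 A k) r l"
  shows "is_run A (\<lambda>m. proj (r (2 * m))) (\<lambda>m. [l (2 * m) ! 1, l (Suc (2 * m)) ! 0])"
    and "l (2 * m) ! 0 = None" and "l (Suc (2 * m)) ! 1 = None"
proof -
  have st: "(proj (r (2 * m)), [l (2 * m) ! 1, l (Suc (2 * m)) ! 0], proj (r (2 * Suc m))) \<in> trans A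
     \<and> l (2 * m) ! 0 = None \<and> l (Suc (2 * m)) ! 1 = None" for m
  proof -
    obtain p c where pc: "r (2 * m) = Inl (p, c)" using C0_phase[OF run] by blast
    obtain \<alpha> q c' where a: "(p, \<alpha>, q) \<in> trans A" "l (2 * m) = [None, \<alpha> ! 0, None]"
      "l (Suc (2 * m)) ! 0 = \<alpha> ! 1" "l (Suc (2 * m)) ! 1 = None" "r (2 * Suc m) = Inl (q, c')"
      using C0_step[OF run pc] by blast
    have "length \<alpha> = 2" using a(1) kA unfolding is_kaut_def by auto
    then have "[\<alpha> ! 0, \<alpha> ! 1] = \<alpha>" using len2 by metis
    then show ?thesis using a pc by (simp add: proj_def)
  qed
  show "is_run A (\<lambda>m. proj (r (2 * m))) (\<lambda>m. [l (2 * m) ! 1, l (Suc (2 * m)) ! 0])"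
    unfolding is_run_def
  proof (intro conjI allI)
    show "proj (r (2 * 0)) \<in> init A" using run unfolding is_run_def C0_def proj_def by auto
    fix m show "(proj (r (2 * m)), [l (2 * m) ! 1, l (Suc (2 * m)) ! 0], proj (r (2 * Suc m))) \<in> trans A"
      using st by blast
  qed
  show "l (2 * m) ! 0 = None" "l (Suc (2 * m)) ! 1 = None" using st by blast+
qed



lemma run_label2: "run_label 2 l = [component l 0, component l 1]"
  by (simp add: run_label_def numeral_2_eq_2)
lemma run_label3: "run_label 3 l = [component l 0, component l 1, component l 2]"
  by (simp add: run_label_def numeral_3_eq_3 numeral_2_eq_2)

lemma inj_aux:
  assumes kA: "is_kaut 2 A" and real: "realizes_1_2 A f" and k: "0 < k"
    and fin: "finite (UNIV :: 'a set)"
    and inj: "inj_on h (states (C0 A k))"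
    and acc: "[z, y, w] \<in> accepted 3 (ren h (C0 A k :: (_, 'a) kaut))"
  shows "f y = Some z"
proof -
  obtain r l where ar: "accepting_run 3 (ren h (C0 A k)) r l" and rl: "[z, y, w] = run_label 3 l"
    using acc unfolding accepted_def by blast
  have zy: "z = component l 0" "y = component l 1" using rl by (auto simp: run_label3)
  have kC: "is_kaut 3 (C0 A k)" by (rule C0_kaut[OF kA k fin])
  have run0: "is_run (C0 A k) (inv_into (states (C0 A k)) h \<circ> r) l"
    using ren_run_back[OF kC inj] ar unfolding accepting_run_def by blast
  define lA where "lA = (\<lambda>m. [l (2 * m) ! 1, l (Suc (2 * m)) ! 0])"
  have runA: "is_run A (\<lambda>m. proj ((inv_into (states (C0 A k)) h \<circ> r) (2 * m))) lA"
    unfolding lA_def by (rule C0_to_A(1)[OF kA run0])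
  have n0: "l (2 * m) ! 0 = None" and n1: "l (Suc (2 * m)) ! 1 = None" for m
    using C0_to_A(2,3)[OF kA run0] by auto
  have e1: "l (2 * m) ! 1 = lA m ! 0" for m unfolding lA_def by simp
  have e0: "l (Suc (2 * m)) ! 0 = lA m ! 1" for m unfolding lA_def by simp
  have no1: "l n ! 1 = None" if "n \<notin> range (\<lambda>m::nat. 2 * m)" for n
    using notr2[OF that] n1 by metis
  have no0: "l n ! 0 = None" if "n \<notin> range (\<lambda>m::nat. Suc (2 * m))" for n
    using notr2s[OF that] n0 by metis
  have i1: "infinite {n. l n ! 1 \<noteq> None}" and i0: "infinite {n. l n ! 0 \<noteq> None}"
    using ar unfolding accepting_run_def by auto
  have iA0: "infinite {m. lA m ! 0 \<noteq> None}"
    using stretch_inf[of "\<lambda>m. 2 * m" l 1 lA 0, OF sm2 e1 no1] i1 by simp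
  have iA1: "infinite {m. lA m ! 1 \<noteq> None}"
    using stretch_inf[of "\<lambda>m. Suc (2 * m)" l 0 lA 1, OF sm2s e0 no0] i0 by simp
  have c1: "component l 1 = component lA 0"
    by (rule stretch_comp[of "\<lambda>m. 2 * m", OF sm2 e1 no1 iA0])
  have c0: "component l 0 = component lA 1"
    by (rule stretch_comp[of "\<lambda>m. Suc (2 * m)", OF sm2s e0 no0 iA1])
  have "accepting_run 2 A (\<lambda>m. proj ((inv_into (states (C0 A k)) h \<circ> r) (2 * m))) lA"
    unfolding accepting_run_def using runA iA0 iA1 by (auto simp: less_2_cases_iff)
  moreover have "[y, z] = run_label 2 lA" using zy c0 c1 by (simp add: run_label2)
  ultimately have "[y, z] \<in> accepted 2 A" unfolding accepted_def by blast
  then show ?thesis using real unfolding realizes_1_2_def by blast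
qed

lemma rho_le:
  fixes f :: "(nat \<Rightarrow> 'a::finite) \<Rightarrow> (nat \<Rightarrow> 'a) option"
    and A :: "('q, 'a) kaut"
  assumes kA: "is_kaut 2 A" and dA: "deterministic 1 A" and real: "realizes_1_2 A f"
    and accA: "accepting_run 2 A rA lA" and k: "0 < k"
  shows "rho (component lA 1) (component lA 0) \<le> ereal (2 / real k)"
proof -
  have fin: "finite (UNIV :: 'a set)" by simp
  have kC: "is_kaut 3 (C0 A k :: (_, 'a) kaut)" by (rule C0_kaut[OF kA k fin])
  obtain h :: "_ \<Rightarrow> nat" and N where hN: "h ` states (C0 A k) = {i. i < N}" "inj_on h (states (C0 A k))"
    using finite_imp_inj_to_nat_seg kC unfolding is_kaut_def by metis
  define C where "C = ren h (C0 A k)"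
  have comp: "compressor C"
    unfolding compressor_def
  proof (intro conjI allI impI)
    show "is_kaut 3 C" unfolding C_def by (rule ren_kaut[OF kC])
    show "deterministic 2 C" unfolding C_def by (rule ren_det[OF kC hN(2) C0_det[OF kA dA]])
    fix y z z' w
    assume "[z, y, w] \<in> accepted 3 C" "[z', y, w] \<in> accepted 3 C"
    then have "f y = Some z" "f y = Some z'"
      using inj_aux[OF kA real k fin hN(2)] unfolding C_def by blast+
    then show "z = z'" by simp
  qed
  have runA: "is_run A rA lA" using accA unfolding accepting_run_def by blast
  have run0: "is_run (C0 A k) (rCd k rA lA) (lCd k lA)" by (rule A_to_C0[OF kA runA k])
  have iA0: "infinite {m. lA m ! 0 \<noteq> None}" and iA1: "infinite {m. lA m ! 1 \<noteq> None}"
    using accA unfolding accepting_run_def by auto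
  have e1: "lCd k lA (2 * m) ! 1 = lA m ! 0" for m by (rule lCd_props(1))
  have e0: "lCd k lA (Suc (2 * m)) ! 0 = lA m ! 1" for m by (rule lCd_props(2))
  have no1: "lCd k lA n ! 1 = None" if "n \<notin> range (\<lambda>m::nat. 2 * m)" for n
    using notr2[OF that] lCd_props(4) by metis
  have no0: "lCd k lA n ! 0 = None" if "n \<notin> range (\<lambda>m::nat. Suc (2 * m))" for n
    using notr2s[OF that] lCd_props(3) by metis
  have i1: "infinite {n. lCd k lA n ! 1 \<noteq> None}"
    using stretch_inf[of "\<lambda>m. 2 * m" "lCd k lA" 1 lA 0, OF sm2 e1 no1] iA0 by simp
  have i0: "infinite {n. lCd k lA n ! 0 \<noteq> None}"
    using stretch_inf[of "\<lambda>m. Suc (2 * m)" "lCd k lA" 0 lA 1, OF sm2s e0 no0] iA1 by simp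
  have i2: "infinite {n. lCd k lA n ! 2 \<noteq> None}" by (rule out_inf[OF run0 k i0])
  have c1: "component (lCd k lA) 1 = component lA 0"
    by (rule stretch_comp[of "\<lambda>m. 2 * m", OF sm2 e1 no1 iA0])
  have c0: "component (lCd k lA) 0 = component lA 1"
    by (rule stretch_comp[of "\<lambda>m. Suc (2 * m)", OF sm2s e0 no0 iA1])
  have accC: "accepting_run 3 C (h \<circ> rCd k rA lA) (lCd k lA)"
    unfolding accepting_run_def C_def
  proof (intro conjI allI impI)
    show "is_run (ren h (C0 A k)) (h \<circ> rCd k rA lA) (lCd k lA)" by (rule ren_run[OF run0])
    fix i :: nat assume "i < 3"
    then have "i = 0 \<or> i = 1 \<or> i = 2" by auto
    then show "infinite {n. lCd k lA n ! i \<noteq> None}" using i0 i1 i2 by auto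
  qed
  have "rho (component lA 1) (component lA 0) \<le> rho_run (lCd k lA)"
  proof -
    have mem: "(C, h \<circ> rCd k rA lA, lCd k lA) \<in> {(C :: (nat, 'a) kaut, r, l). compressor C \<and> accepting_run 3 C r l
                 \<and> component l 0 = component lA 1 \<and> component l 1 = component lA 0}"
      using comp accC c0 c1 by auto
    show ?thesis unfolding rho_def using INF_lower[OF mem, of "\<lambda>(C, r, l). rho_run l"] by simp
  qed
  also have "\<dots> \<le> ereal (2 / real k)" by (rule rho_bound[OF run0 k i0])
  finally show ?thesis .
qed

lemma rho_nonneg: "0 \<le> rho z y"
  unfolding rho_def
proof (rule INF_greatest)
  fix t assume "t \<in> {(C :: (nat, 'a) kaut, r, l). compressor C \<and> accepting_run 3 C r l
                 \<and> component l 0 = z \<and> component l 1 = y}"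
  obtain C r l where t: "t = (C, r, l)" by (cases t) auto
  have "0 \<le> rho_run l" unfolding rho_run_def
    by (rule Liminf_bounded) simp
  then show "0 \<le> (case t of (C, r, l) \<Rightarrow> rho_run l)" using t by simp
qed

theorem proposition3:
  fixes f :: "(nat \<Rightarrow> 'a::finite) \<Rightarrow> (nat \<Rightarrow> 'a) option"
    and A :: "('q, 'a) kaut"
    and x :: "nat \<Rightarrow> 'a"
  assumes "is_kaut 2 A" and "deterministic 1 A" and "realizes_1_2 A f"
    and "x \<in> dom f"
  shows "rho (the (f x)) x = 0"
proof -
  obtain z where fz: "f x = Some z" using assms(4) by auto
  then have "[x, z] \<in> accepted 2 A" using assms(3) unfolding realizes_1_2_def by blast
  then obtain rA lA where accA: "accepting_run 2 A rA lA" and xz: "[x, z] = run_label 2 lA"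
    unfolding accepted_def by blast
  have xz': "x = component lA 0" "z = component lA 1" using xz by (auto simp: run_label2)
  have le: "rho z x \<le> ereal (2 / real k)" if "0 < k" for k
    unfolding xz' by (rule rho_le[OF assms(1-3) accA that])
  have "rho z x \<le> 0"
  proof (rule ereal_le_epsilon2)
    fix e :: real assume e: "0 < e"
    obtain n :: nat where n: "2 / e < real n" using reals_Archimedean2 by blast
    then have "0 < n" using e by (metis divide_pos_pos of_nat_0_less_iff order.strict_trans zero_less_numeral)
    then have "rho z x \<le> ereal (2 / real n)" by (rule le)
    moreover have "2 / real n \<le> e" using n e \<open>0 < n\<close> by (simp add: divide_simps mult.commute)
    ultimately show "rho z x \<le> 0 + ereal e" by (simp add: order_trans)
  qed
  then show ?thesis using rho_nonneg[of z x] fz by simp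
qed


end
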